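(* For every $n\in\mathbb{N}$ and $\varepsilon\in(0,1)$, the set $\mathsf{PAULI}_n$ of $n$-qubit Pauli channels admits a uniformly $\varepsilon$-approximate sample compression scheme of size $\mathcal{O}\big(\frac{n}{\varepsilon^2}\big)$. This sample compression scheme even succeeds on training data whose labels have been corrupted by adversarial label noise of strength $\varepsilon/3$: for every $\mathcal{P}\in\mathsf{PAULI}_n$ and every finite sample $S=\{(E^{(i)},y_i)\}_{i=1}^m$ with $|y_i-f_{\mathcal{P}}(E^{(i)})|\leq\varepsilon/3$ for all $i$, the reconstructed function $\hat f=\rho(\kappa(S))$ satisfies $|\hat f(E^{(i)})-f_{\mathcal{P}}(E^{(i)})|\leq\varepsilon$ for all $i$.
   Context: $\mathsf{X}$ is the set of channel test operators on two $n$-qubit systems $A,B$: $E_{A,B}\geq0$ with $E_{A,B}\leq\sigma_A\otimes\mathbb{1}_B$ for some density operator $\sigma_A$. An $n$-qubit Pauli channel is $\mathcal{P}(\rho)=\sum_{\vec z,\vec x}p_{\vec z,\vec x}P^{\vec z,\vec x}\rho P^{\vec z,\vec x\dagger}$ ($P^{\vec z,\vec x}=\mathrm{i}^{\vec z\cdot\vec x}Z^{\vec z}X^{\vec x}$, $(p_{\vec z,\vec x})$ a probability vector), identified with $f_{\mathcal{P}}:\mathsf{X}\to[0,1]$, $f_{\mathcal{P}}(E)=\mathrm{Tr}[E\,C^{\mathcal{P}}_{A,B}]$, with Choi matrix $C^{\mathcal{P}}_{A,B}=\sum_{i,j}|i\rangle\langle j|\otimes\mathcal{P}(|i\rangle\langle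 j|)$. A uniformly $\varepsilon$-approximate sample compression scheme of size $k$ for a class $\mathcal{F}\subseteq[0,1]^{\mathsf{X}}$ is a pair of maps: a compression map $\kappa$ sending each finite sample $S\subseteq\mathsf{X}\times[0,1]$ to a subsample $\kappa(S)\subseteq S$ of size at most $k$, and a reconstruction map $\rho$ sending such subsamples to functions $\mathsf{X}\to[0,1]$, such that for all $f\in\mathcal{F}$ and all $S=\{(x_i,f(x_i))\}_{i=1}^m$ we have $\max_i|\rho(\kappa(S))(x_i)-f(x_i)|\leq\varepsilon$. *)

theory Defs
  imports "Jordan_Normal_Form.Schur_Decomposition"
begin

text \<open>Kronecker (tensor) product; the left factor is the most significant index.\<close>
definition kron :: "complex mat \<Rightarrow> complex mat \<Rightarrow> complex mat" where
  "kron A B = mat (dim_row A * dim_row B) (dim_col A * dim_col B)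
     (\<lambda>(i,j). A $$ (i div dim_row B, j div dim_col B) * B $$ (i mod dim_row B, j mod dim_col B))"

definition mat_trace :: "complex mat \<Rightarrow> complex" where
  "mat_trace A = (\<Sum>i < dim_row A. A $$ (i, i))"

definition msum :: "nat \<Rightarrow> ('i \<Rightarrow> complex mat) \<Rightarrow> 'i set \<Rightarrow> complex mat" where
  "msum d F I = mat d d (\<lambda>ij. \<Sum>k \<in> I. F k $$ ij)"

definition psd :: "nat \<Rightarrow> complex mat \<Rightarrow> bool" where
  "psd d A \<longleftrightarrow> A \<in> carrier_mat d d \<and> mat_adjoint A = A \<and>
     (\<forall>v \<in> carrier_vec d. 0 \<le> Re ((A *\<^sub>v v) \<bullet>c v))"

definition loewner_le :: "nat \<Rightarrow> complex mat \<Rightarrow> complex mat \<Rightarrow> bool" where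
  "loewner_le d A B \<longleftrightarrow> A \<in> carrier_mat d d \<and> B \<in> carrier_mat d d \<and> psd d (B - A)"

definition density_op :: "nat \<Rightarrow> complex mat \<Rightarrow> bool" where
  "density_op d \<sigma> \<longleftrightarrow> psd d \<sigma> \<and> mat_trace \<sigma> = 1"

definition test_ops :: "nat \<Rightarrow> complex mat set" where
  "test_ops n = {E. psd (2^n * 2^n) E \<and>
     (\<exists>\<sigma>. density_op (2^n) \<sigma> \<and> loewner_le (2^n * 2^n) E (kron \<sigma> (1\<^sub>m (2^n))))}"

definition pauli_X :: "complex mat" where
  "pauli_X = mat 2 2 (\<lambda>(i,j). if i \<noteq> j then 1 else 0)"

definition pauli_Z :: "complex mat" where
  "pauli_Z = mat 2 2 (\<lambda>(i,j). if i = j then (if i = 0 then 1 else -1) else 0)"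

fun ZX :: "bool list \<Rightarrow> bool list \<Rightarrow> complex mat" where
  "ZX (z # zs) (x # xs) =
     kron ((if z then pauli_Z else 1\<^sub>m 2) * (if x then pauli_X else 1\<^sub>m 2)) (ZX zs xs)"
| "ZX _ _ = 1\<^sub>m 1"

definition bdot :: "bool list \<Rightarrow> bool list \<Rightarrow> nat" where
  "bdot z x = length (filter (\<lambda>(a,b). a \<and> b) (zip z x))"

definition pauli_op :: "bool list \<Rightarrow> bool list \<Rightarrow> complex mat" where
  "pauli_op z x = (\<i> ^ bdot z x) \<cdot>\<^sub>m ZX z x"

definition pauli_idx :: "nat \<Rightarrow> (bool list \<times> bool list) set" where
  "pauli_idx n = {(z, x). length z = n \<and> length x = n}"

text \<open>The probability vectors parametrising n-qubit Pauli channels (PAULI_n).\<close>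
definition pauli_channels :: "nat \<Rightarrow> (bool list \<times> bool list \<Rightarrow> real) set" where
  "pauli_channels n = {p. (\<forall>zx \<in> pauli_idx n. 0 \<le> p zx) \<and> (\<Sum>zx \<in> pauli_idx n. p zx) = 1}"

definition pauli_apply :: "nat \<Rightarrow> (bool list \<times> bool list \<Rightarrow> real) \<Rightarrow> complex mat \<Rightarrow> complex mat" where
  "pauli_apply n p \<rho> = msum (2^n)
     (\<lambda>(z, x). complex_of_real (p (z, x)) \<cdot>\<^sub>m (pauli_op z x * \<rho> * mat_adjoint (pauli_op z x)))
     (pauli_idx n)"

definition ketbra :: "nat \<Rightarrow> nat \<Rightarrow> nat \<Rightarrow> complex mat" where
  "ketbra d i j = mat d d (\<lambda>(a,b). if a = i \<and> b = j then 1 else 0)"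

definition choi :: "nat \<Rightarrow> (bool list \<times> bool list \<Rightarrow> real) \<Rightarrow> complex mat" where
  "choi n p = msum (2^n * 2^n)
     (\<lambda>(i, j). kron (ketbra (2^n) i j) (pauli_apply n p (ketbra (2^n) i j)))
     ({..<2^n} \<times> {..<2^n})"

text \<open>f_P(E) = Tr[E C^P] (real for test operators; we take the real part).\<close>
definition f_pauli :: "nat \<Rightarrow> (bool list \<times> bool list \<Rightarrow> real) \<Rightarrow> complex mat \<Rightarrow> real" where
  "f_pauli n p E = Re (mat_trace (E * choi n p))"

end

theory Submission
  imports Defs
begin


lemma adj_dim[simp]: "dim_row (mat_adjoint A) = dim_col A" "dim_col (mat_adjoint A) = dim_row A"
  unfolding mat_adjoint_def by auto

lemma adj_idx[simp]: "i < dim_col A \<Longrightarrow> j < dim_row A \<Longrightarrow> mat_adjoint A $$ (i,j) = cnj (A $$ (j,i))"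
  unfolding mat_adjoint_def by (simp add: mat_of_rows_index)

lemma sum_split_mult: "(\<Sum>k<a*b. f k) = (\<Sum>i<a. \<Sum>j<b. f (i*b+j::nat))"
proof (induction a)
  case 0 then show ?case by simp
next
  case (Suc a)
  have "{..<Suc a * b} = {..<a*b} \<union> {a*b..<a*b+b}" by auto
  then have "(\<Sum>k<Suc a*b. f k) = (\<Sum>k<a*b. f k) + (\<Sum>k\<in>{a*b..<a*b+b}. f k)"
    by (simp add: sum.union_disjoint ivl_disj_int)
  also have "(\<Sum>k\<in>{a*b..<a*b+b}. f k) = (\<Sum>j<b. f (a*b+j))"
    using sum.shift_bounds_nat_ivl[of f 0 "a*b" b] by (simp add: lessThan_atLeast0 add.commute)
  finally show ?case using Suc by simp
qed



definition orthc :: "nat \<Rightarrow> complex mat \<Rightarrow> bool" where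
  "orthc d M \<longleftrightarrow> M \<in> carrier_mat d d \<and>
     (\<forall>i<d. \<forall>j<d. (\<Sum>k<d. cnj (M$$(k,i)) * M$$(k,j)) = (if i = j then 1 else 0))"

lemma kron_carrier: "A \<in> carrier_mat d1 d1 \<Longrightarrow> B \<in> carrier_mat d2 d2 \<Longrightarrow> kron A B \<in> carrier_mat (d1*d2) (d1*d2)"
  unfolding kron_def by auto

lemma kron_idx: "A \<in> carrier_mat d1 d1 \<Longrightarrow> B \<in> carrier_mat d2 d2 \<Longrightarrow> i < d1*d2 \<Longrightarrow> j < d1*d2 \<Longrightarrow>
  kron A B $$ (i,j) = A $$ (i div d2, j div d2) * B $$ (i mod d2, j mod d2)"
  unfolding kron_def by auto

lemma orthc_kron:
  assumes A: "orthc d1 A" and B: "orthc d2 B"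
  shows "orthc (d1*d2) (kron A B)"
  unfolding orthc_def
proof (intro conjI allI impI)
  have cA: "A \<in> carrier_mat d1 d1" and cB: "B \<in> carrier_mat d2 d2" using A B unfolding orthc_def by auto
  show "kron A B \<in> carrier_mat (d1 * d2) (d1 * d2)" using kron_carrier[OF cA cB] .
  fix i j assume i: "i < d1*d2" and j: "j < d1*d2"
  then have d2: "d2 > 0" by (cases "d2 = 0") auto
  have id: "i div d2 < d1" "j div d2 < d1" using i j by (auto simp: less_mult_imp_div_less)
  have im: "i mod d2 < d2" "j mod d2 < d2" using d2 by auto
  have "(\<Sum>k<d1*d2. cnj (kron A B $$ (k,i)) * kron A B $$ (k,j))
     = (\<Sum>k1<d1. \<Sum>k2<d2. cnj (kron A B $$ (k1*d2+k2,i)) * kron A B $$ (k1*d2+k2,j))"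
    by (rule sum_split_mult)
  also have "\<dots> = (\<Sum>k1<d1. \<Sum>k2<d2. (cnj (A $$ (k1, i div d2)) * A $$ (k1, j div d2)) *
        (cnj (B $$ (k2, i mod d2)) * B $$ (k2, j mod d2)))"
  proof (intro sum.cong refl)
    fix k1 k2 assume k1: "k1 \<in> {..<d1}" and k2: "k2 \<in> {..<d2}"
    have lt: "k1*d2+k2 < d1*d2"
    proof -
      have "k1*d2+k2 < k1*d2 + d2" using k2 by auto
      also have "\<dots> = (k1+1)*d2" by simp
      also have "\<dots> \<le> d1*d2" using k1 by (intro mult_right_mono) auto
      finally show ?thesis .
    qed
    have dv: "(k1*d2+k2) div d2 = k1" "(k1*d2+k2) mod d2 = k2" using k2 d2 by auto
    show "cnj (kron A B $$ (k1*d2+k2,i)) * kron A B $$ (k1*d2+k2,j) =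
      (cnj (A $$ (k1, i div d2)) * A $$ (k1, j div d2)) * (cnj (B $$ (k2, i mod d2)) * B $$ (k2, j mod d2))"
      using kron_idx[OF cA cB lt i] kron_idx[OF cA cB lt j] dv by (simp add: algebra_simps)
  qed
  also have "\<dots> = (\<Sum>k1<d1. cnj (A $$ (k1, i div d2)) * A $$ (k1, j div d2)) *
        (\<Sum>k2<d2. cnj (B $$ (k2, i mod d2)) * B $$ (k2, j mod d2))"
    by (simp add: sum_product)
  also have "\<dots> = (if i div d2 = j div d2 then 1 else 0) * (if i mod d2 = j mod d2 then 1 else 0)"
    using A B id im unfolding orthc_def by auto
  also have "\<dots> = (if i = j then 1 else 0)"
  proof (cases "i = j")
    case False
    then have "i div d2 \<noteq> j div d2 \<or> i mod d2 \<noteq> j mod d2" by (metis div_mult_mod_eq)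
    then show ?thesis using False by auto
  qed simp
  finally show "(\<Sum>k<d1*d2. cnj (kron A B $$ (k,i)) * kron A B $$ (k,j)) = (if i = j then 1 else 0)" .
qed

lemma orthc_smult: assumes "orthc d M" "cnj c * c = 1" shows "orthc d (c \<cdot>\<^sub>m M)"
proof -
  have cM: "M \<in> carrier_mat d d" using assms unfolding orthc_def by auto
  { fix i j assume i: "i < d" and j: "j < d"
    have "(\<Sum>k<d. cnj ((c \<cdot>\<^sub>m M)$$(k,i)) * (c \<cdot>\<^sub>m M)$$(k,j)) = (\<Sum>k<d. (cnj c * c) * (cnj (M$$(k,i)) * M$$(k,j)))"
      using cM i j by (intro sum.cong) (auto simp: algebra_simps)
    also have "\<dots> = (if i = j then 1 else 0)" using assms(1) assms(2) i j unfolding orthc_def by simp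
    finally have "(\<Sum>k<d. cnj ((c \<cdot>\<^sub>m M)$$(k,i)) * (c \<cdot>\<^sub>m M)$$(k,j)) = (if i = j then 1 else 0)" . }
  then show ?thesis using cM unfolding orthc_def by auto
qed

lemma orthc_one: "orthc 1 (1\<^sub>m 1)" unfolding orthc_def by auto

lemma ZX2: "pauli_Z * pauli_X = mat 2 2 (\<lambda>(i,j). if i \<noteq> j then (if i = 0 then 1 else -1) else 0)"
  by (rule eq_matI) (auto simp: pauli_Z_def pauli_X_def scalar_prod_def numeral_2_eq_2 lessThan_atLeast0[symmetric])

lemma orthc_2I:
  assumes "M \<in> carrier_mat 2 2"
    "cnj (M$$(0,0)) * M$$(0,0) + cnj (M$$(1,0)) * M$$(1,0) = 1"
    "cnj (M$$(0,1)) * M$$(0,1) + cnj (M$$(1,1)) * M$$(1,1) = 1"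
    "cnj (M$$(0,0)) * M$$(0,1) + cnj (M$$(1,0)) * M$$(1,1) = 0"
    "cnj (M$$(0,1)) * M$$(0,0) + cnj (M$$(1,1)) * M$$(1,0) = 0"
  shows "orthc 2 M"
proof -
  have ex: "\<And>k::nat. k < 2 \<longleftrightarrow> k = 0 \<or> k = 1" by auto
  have s2: "\<And>f::nat\<Rightarrow>complex. (\<Sum>k<2. f k) = f 0 + f 1" by (simp add: numeral_2_eq_2)
  show ?thesis unfolding orthc_def s2 ex using assms by auto
qed

lemma orthc_2x2:
  "orthc 2 ((if z then pauli_Z else 1\<^sub>m 2) * (if x then pauli_X else 1\<^sub>m 2))"
proof -
  have cZ: "pauli_Z \<in> carrier_mat 2 2" and cX: "pauli_X \<in> carrier_mat 2 2" by (auto simp: pauli_Z_def pauli_X_def)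
  show ?thesis
  proof (cases z; cases x)
    assume "z" "x" then show ?thesis by (simp add: ZX2, intro orthc_2I) auto
  next
    assume "z" "\<not>x" then show ?thesis using cZ by (intro orthc_2I) (auto simp: pauli_Z_def)
  next
    assume "\<not>z" "x" then show ?thesis using cX by (intro orthc_2I) (auto simp: pauli_X_def)
  next
    assume "\<not>z" "\<not>x" then show ?thesis by (intro orthc_2I) auto
  qed
qed

lemma orthc_ZX: "length x = length z \<Longrightarrow> orthc (2^length z) (ZX z x)"
proof (induction z arbitrary: x)
  case Nil then show ?case using orthc_one by simp
next
  case (Cons a zs)
  then obtain b xs where x: "x = b # xs" and l: "length xs = length zs" by (cases x) auto
  show ?case using orthc_kron[OF orthc_2x2[of a b] Cons.IH[OF l]] x by simp
qed

lemma cnj_ii_pow: "cnj (\<i> ^ k) * \<i> ^ k = 1"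
proof -
  have "cnj (\<i> ^ k) * \<i> ^ k = (cnj \<i> * \<i>) ^ k" by (simp only: power_mult_distrib complex_cnj_power)
  also have "\<dots> = 1" by simp
  finally show ?thesis .
qed

lemma orthc_pauli: "length x = n \<Longrightarrow> length z = n \<Longrightarrow> orthc (2^n) (pauli_op z x)"
  unfolding pauli_op_def using orthc_smult[OF orthc_ZX[of x z] cnj_ii_pow] by simp



lemma mult_idx: "i < dim_row A \<Longrightarrow> j < dim_col B \<Longrightarrow> dim_col A = dim_row B \<Longrightarrow>
   (A*B)$$(i,j) = (\<Sum>t<dim_row B. A$$(i,t) * B$$(t,j))"
  by (simp add: scalar_prod_def lessThan_atLeast0)

definition PM :: "bool list \<times> bool list \<Rightarrow> complex mat" where
  "PM a = pauli_op (fst a) (snd a)"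

definition wv :: "nat \<Rightarrow> bool list \<times> bool list \<Rightarrow> complex vec" where
  "wv n a = vec (2^n * 2^n) (\<lambda>r. PM a $$ (r mod 2^n, r div 2^n))"

definition cf :: "nat \<Rightarrow> complex mat \<Rightarrow> bool list \<times> bool list \<Rightarrow> real" where
  "cf n E a = Re ((E *\<^sub>v wv n a) \<bullet>c wv n a)"

lemma PM_orthc: "a \<in> pauli_idx n \<Longrightarrow> orthc (2^n) (PM a)"
  unfolding PM_def pauli_idx_def by (cases a) (auto intro: orthc_pauli)

lemma PM_carrier: "a \<in> pauli_idx n \<Longrightarrow> PM a \<in> carrier_mat (2^n) (2^n)"
  using PM_orthc unfolding orthc_def by auto

lemma ketbra_carrier[simp]: "ketbra d i j \<in> carrier_mat d d"
  unfolding ketbra_def by auto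

lemma sandwich:
  assumes M: "M \<in> carrier_mat d d" and i: "i < d" and j: "j < d" and k: "k < d" and l: "l < d"
  shows "(M * ketbra d i j * mat_adjoint M) $$ (k,l) = M$$(k,i) * cnj (M$$(l,j))"
proof -
  have MK: "\<And>m. m < d \<Longrightarrow> (M * ketbra d i j) $$ (k,m) = (if m = j then M$$(k,i) else 0)"
  proof -
    fix m assume m: "m < d"
    have "(M * ketbra d i j) $$ (k,m) = (\<Sum>t<d. M$$(k,t) * ketbra d i j $$(t,m))"
      using M k m by (subst mult_idx) (auto simp: ketbra_def)
    also have "\<dots> = (\<Sum>t<d. if t = i then (if m = j then M$$(k,i) else 0) else 0)"
      using m by (intro sum.cong) (auto simp: ketbra_def)
    also have "\<dots> = (if m = j then M$$(k,i) else 0)" using i by simp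
    finally show "(M * ketbra d i j) $$ (k,m) = (if m = j then M$$(k,i) else 0)" .
  qed
  have "(M * ketbra d i j * mat_adjoint M) $$ (k,l) = (\<Sum>m<d. (M * ketbra d i j)$$(k,m) * mat_adjoint M $$(m,l))"
    using M k l by (subst mult_idx) (auto simp: ketbra_def)
  also have "\<dots> = (\<Sum>m<d. if m = j then M$$(k,i) * cnj (M$$(l,j)) else 0)"
    using M l by (intro sum.cong) (auto simp: MK)
  also have "\<dots> = M$$(k,i) * cnj (M$$(l,j))" using j by simp
  finally show ?thesis .
qed

lemma pauli_apply_idx:
  assumes i: "i < 2^n" and j: "j < 2^n" and k: "k < 2^n" and l: "l < 2^n"
  shows "pauli_apply n p (ketbra (2^n) i j) $$ (k,l) =
     (\<Sum>a\<in>pauli_idx n. complex_of_real (p a) * (PM a $$ (k,i) * cnj (PM a $$ (l,j))))"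
  unfolding pauli_apply_def msum_def using k l
  apply simp
  apply (intro sum.cong refl)
  subgoal for a
    using PM_carrier[of a n] sandwich[OF PM_carrier[of a n] i j k l]
    by (cases a) (simp add: PM_def)
  done

lemma choi_idx:
  assumes r: "r < 2^n * 2^n" and s: "s < 2^n * 2^n"
  shows "choi n p $$ (r,s) = (\<Sum>a\<in>pauli_idx n. complex_of_real (p a) * (wv n a $ r * cnj (wv n a $ s)))"
proof -
  let ?d = "2^n :: nat"
  have d: "?d > 0" by simp
  have rd: "r div ?d < ?d" "s div ?d < ?d" using r s by (auto simp: less_mult_imp_div_less)
  have rm: "r mod ?d < ?d" "s mod ?d < ?d" by auto
  have PAc: "\<And>i j. pauli_apply n p (ketbra ?d i j) \<in> carrier_mat ?d ?d"
    unfolding pauli_apply_def msum_def by auto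
  have "choi n p $$ (r,s) = (\<Sum>ij\<in>{..<?d} \<times> {..<?d}.
      (\<lambda>(i,j). kron (ketbra ?d i j) (pauli_apply n p (ketbra ?d i j))) ij $$ (r,s))"
    unfolding choi_def msum_def using r s by simp
  also have "\<dots> = (\<Sum>ij\<in>{..<?d} \<times> {..<?d}. if ij = (r div ?d, s div ?d) then
        pauli_apply n p (ketbra ?d (r div ?d) (s div ?d)) $$ (r mod ?d, s mod ?d) else 0)"
  proof (intro sum.cong refl)
    fix ij assume "ij \<in> {..<?d} \<times> {..<?d}"
    obtain i j where ij: "ij = (i,j)" by (cases ij)
    show "(\<lambda>(i,j). kron (ketbra ?d i j) (pauli_apply n p (ketbra ?d i j))) ij $$ (r,s) =
       (if ij = (r div ?d, s div ?d) then pauli_apply n p (ketbra ?d (r div ?d) (s div ?d)) $$ (r mod ?d, s mod ?d) else 0)"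
      using kron_idx[OF ketbra_carrier PAc r s] unfolding ij by (auto simp: ketbra_def rd)
  qed
  also have "\<dots> = pauli_apply n p (ketbra ?d (r div ?d) (s div ?d)) $$ (r mod ?d, s mod ?d)"
    using rd by (simp add: sum.delta')
  also have "\<dots> = (\<Sum>a\<in>pauli_idx n. complex_of_real (p a) * (PM a $$ (r mod ?d, r div ?d) * cnj (PM a $$ (s mod ?d, s div ?d))))"
    by (rule pauli_apply_idx[OF rd rm])
  also have "\<dots> = (\<Sum>a\<in>pauli_idx n. complex_of_real (p a) * (wv n a $ r * cnj (wv n a $ s)))"
    using r s by (simp add: wv_def)
  finally show ?thesis .
qed

lemma bool_lists: "finite {z::bool list. length z = n}" "card {z::bool list. length z = n} = 2^n"
proof -
  have L: "{z::bool list. length z = n} = {z. set z \<subseteq> UNIV \<and> length z = n}" by auto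
  show "finite {z::bool list. length z = n}" unfolding L by (rule finite_lists_length_eq) simp
  show "card {z::bool list. length z = n} = 2^n" unfolding L by (subst card_lists_length_eq) (auto simp: card_UNIV_bool)
qed

lemma pauli_idx_prod: "pauli_idx n = {z. length z = n} \<times> {x. length x = n}"
  unfolding pauli_idx_def by auto

lemma finite_pauli_idx: "finite (pauli_idx n)"
  unfolding pauli_idx_prod using bool_lists by simp

lemma card_pauli_idx: "card (pauli_idx n) = 4^n"
proof -
  have "card (pauli_idx n) = 2^n * 2^n" unfolding pauli_idx_prod using bool_lists by (simp add: card_cartesian_product)
  then show ?thesis by (simp add: power_mult_distrib[symmetric])
qed

lemma f_pauli_lin:
  assumes E: "E \<in> carrier_mat (2^n * 2^n) (2^n * 2^n)"
  shows "f_pauli n p E = (\<Sum>a\<in>pauli_idx n. p a * cf n E a)"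
proof -
  let ?D = "2^n * 2^n :: nat"
  have cC: "choi n p \<in> carrier_mat ?D ?D" unfolding choi_def msum_def by simp
  have "mat_trace (E * choi n p) = (\<Sum>r<?D. (E * choi n p) $$ (r,r))"
    unfolding mat_trace_def using E by simp
  also have "\<dots> = (\<Sum>r<?D. \<Sum>s<?D. E$$(r,s) * choi n p $$ (s,r))"
    using E cC by (intro sum.cong refl) (subst mult_idx, auto)
  also have "\<dots> = (\<Sum>r<?D. \<Sum>s<?D. \<Sum>a\<in>pauli_idx n. E$$(r,s) * (complex_of_real (p a) * (wv n a $ s * cnj (wv n a $ r))))"
    by (intro sum.cong refl) (simp add: choi_idx sum_distrib_left)
  also have "\<dots> = (\<Sum>r<?D. \<Sum>a\<in>pauli_idx n. \<Sum>s<?D. E$$(r,s) * (complex_of_real (p a) * (wv n a $ s * cnj (wv n a $ r))))"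
    by (intro sum.cong refl) (rule sum.swap)
  also have "\<dots> = (\<Sum>a\<in>pauli_idx n. \<Sum>r<?D. \<Sum>s<?D. E$$(r,s) * (complex_of_real (p a) * (wv n a $ s * cnj (wv n a $ r))))"
    by (rule sum.swap)
  also have "\<dots> = (\<Sum>a\<in>pauli_idx n. complex_of_real (p a) * (\<Sum>r<?D. (\<Sum>s<?D. E$$(r,s) * wv n a $ s) * cnj (wv n a $ r)))"
    by (intro sum.cong refl) (simp add: sum_distrib_left sum_distrib_right mult.assoc mult.left_commute)
  also have "\<dots> = (\<Sum>a\<in>pauli_idx n. complex_of_real (p a) * ((E *\<^sub>v wv n a) \<bullet>c wv n a))"
    using E by (intro sum.cong refl) (simp add: scalar_prod_def wv_def lessThan_atLeast0)
  finally show ?thesis unfolding f_pauli_def cf_def by (simp add: Re_sum)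
qed



lemma idx_split: assumes "i < (d::nat)" "k < d" shows "i*d+k < d*d" "(i*d+k) div d = i" "(i*d+k) mod d = k"
proof -
  have "i*d+k < i*d + d" using assms by auto
  also have "\<dots> = (i+1)*d" by simp
  also have "\<dots> \<le> d*d" using assms by (intro mult_right_mono) auto
  finally show "i*d+k < d*d" .
  show "(i*d+k) div d = i" "(i*d+k) mod d = k" using assms by auto
qed

lemma wv_carrier[simp]: "wv n a \<in> carrier_vec (2^n*2^n)"
  unfolding wv_def by simp

lemma wv_idx: "i < 2^n \<Longrightarrow> k < 2^n \<Longrightarrow> wv n a $ (i*2^n+k) = PM a $$ (k, i)"
  unfolding wv_def using idx_split[of i "2^n" k] by simp

lemma K_form:
  assumes sig: "\<sigma> \<in> carrier_mat (2^n) (2^n)" and a: "a \<in> pauli_idx n"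
  shows "(kron \<sigma> (1\<^sub>m (2^n)) *\<^sub>v wv n a) \<bullet>c wv n a = mat_trace \<sigma>"
proof -
  let ?d = "2^n :: nat"
  let ?K = "kron \<sigma> (1\<^sub>m ?d)"
  let ?w = "wv n a"
  let ?P = "PM a"
  have cK: "?K \<in> carrier_mat (?d*?d) (?d*?d)" using kron_carrier[OF sig, of "1\<^sub>m ?d" ?d] by simp
  have orth: "orthc ?d ?P" using PM_orthc[OF a] .
  have Kidx: "\<And>i k j l. i < ?d \<Longrightarrow> k < ?d \<Longrightarrow> j < ?d \<Longrightarrow> l < ?d \<Longrightarrow>
      ?K $$ (i*?d+k, j*?d+l) = \<sigma> $$ (i,j) * (if k = l then 1 else 0)"
    using kron_idx[OF sig, of "1\<^sub>m ?d" ?d] idx_split by auto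
  have dw: "dim_vec ?w = ?d*?d" by (simp add: wv_def)
  have "(?K *\<^sub>v ?w) \<bullet>c ?w = (\<Sum>r<?d*?d. (?K *\<^sub>v ?w) $ r * cnj (?w $ r))"
    by (simp add: scalar_prod_def dw lessThan_atLeast0)
  also have "\<dots> = (\<Sum>r<?d*?d. (\<Sum>s<?d*?d. ?K $$ (r,s) * ?w $ s) * cnj (?w $ r))"
    using cK by (intro sum.cong refl) (simp add: scalar_prod_def dw lessThan_atLeast0)
  also have "\<dots> = (\<Sum>i<?d. \<Sum>k<?d. (\<Sum>j<?d. \<Sum>l<?d. ?K $$ (i*?d+k, j*?d+l) * ?w $ (j*?d+l)) * cnj (?w $ (i*?d+k)))"
    by (simp add: sum_split_mult)
  also have "\<dots> = (\<Sum>i<?d. \<Sum>k<?d. (\<Sum>j<?d. \<sigma> $$ (i,j) * ?P $$ (k,j)) * cnj (?P $$ (k,i)))"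
  proof (intro sum.cong refl)
    fix i k assume i: "i \<in> {..<?d}" and k: "k \<in> {..<?d}"
    have "(\<Sum>j<?d. \<Sum>l<?d. ?K $$ (i*?d+k, j*?d+l) * ?w $ (j*?d+l)) =
          (\<Sum>j<?d. \<Sum>l<?d. if l = k then \<sigma> $$ (i,j) * ?P $$ (k,j) else 0)"
      using i k by (intro sum.cong refl) (auto simp: Kidx wv_idx)
    also have "\<dots> = (\<Sum>j<?d. \<sigma> $$ (i,j) * ?P $$ (k,j))" using k by simp
    finally show "(\<Sum>j<?d. \<Sum>l<?d. ?K $$ (i*?d+k, j*?d+l) * ?w $ (j*?d+l)) * cnj (?w $ (i*?d+k)) =
        (\<Sum>j<?d. \<sigma> $$ (i,j) * ?P $$ (k,j)) * cnj (?P $$ (k,i))"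
      using i k by (simp add: wv_idx)
  qed
  also have "\<dots> = (\<Sum>i<?d. \<Sum>j<?d. \<sigma> $$ (i,j) * (\<Sum>k<?d. cnj (?P $$ (k,i)) * ?P $$ (k,j)))"
  proof (rule sum.cong[OF refl])
    fix i assume "i \<in> {..<?d}"
    have "(\<Sum>k<?d. (\<Sum>j<?d. \<sigma> $$ (i,j) * ?P $$ (k,j)) * cnj (?P $$ (k,i)))
        = (\<Sum>k<?d. \<Sum>j<?d. \<sigma> $$ (i,j) * (cnj (?P $$ (k,i)) * ?P $$ (k,j)))"
      by (intro sum.cong refl) (simp only: sum_distrib_right, simp add: mult_ac)
    also have "\<dots> = (\<Sum>j<?d. \<Sum>k<?d. \<sigma> $$ (i,j) * (cnj (?P $$ (k,i)) * ?P $$ (k,j)))"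
      by (rule sum.swap)
    also have "\<dots> = (\<Sum>j<?d. \<sigma> $$ (i,j) * (\<Sum>k<?d. cnj (?P $$ (k,i)) * ?P $$ (k,j)))"
      by (simp add: sum_distrib_left)
    finally show "(\<Sum>k<?d. (\<Sum>j<?d. \<sigma> $$ (i,j) * ?P $$ (k,j)) * cnj (?P $$ (k,i))) =
        (\<Sum>j<?d. \<sigma> $$ (i,j) * (\<Sum>k<?d. cnj (?P $$ (k,i)) * ?P $$ (k,j)))" .
  qed
  also have "\<dots> = (\<Sum>i<?d. \<Sum>j<?d. if j = i then \<sigma> $$ (i,i) else 0)"
    using orth unfolding orthc_def by (intro sum.cong refl) auto
  also have "\<dots> = mat_trace \<sigma>" using sig unfolding mat_trace_def by simp
  finally show ?thesis .
qed

lemma cf_bounds: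
  assumes E: "E \<in> test_ops n" and a: "a \<in> pauli_idx n"
  shows "0 \<le> cf n E a" "cf n E a \<le> 1"
proof -
  let ?D = "2^n * 2^n :: nat"
  have pE: "psd ?D E" and "\<exists>\<sigma>. density_op (2^n) \<sigma> \<and> loewner_le ?D E (kron \<sigma> (1\<^sub>m (2^n)))"
    using E unfolding test_ops_def by auto
  then obtain \<sigma> where sig: "density_op (2^n) \<sigma>" and le: "loewner_le ?D E (kron \<sigma> (1\<^sub>m (2^n)))" by blast
  let ?K = "kron \<sigma> (1\<^sub>m (2^n))"
  let ?w = "wv n a"
  show "0 \<le> cf n E a" using pE unfolding psd_def cf_def by auto
  have cE: "E \<in> carrier_mat ?D ?D" using pE unfolding psd_def by auto
  have cS: "\<sigma> \<in> carrier_mat (2^n) (2^n)" and tr: "mat_trace \<sigma> = 1"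
    using sig unfolding density_op_def psd_def by auto
  have cK: "?K \<in> carrier_mat ?D ?D" using kron_carrier[OF cS, of "1\<^sub>m (2^n)" "2^n"] by simp
  have "0 \<le> Re (((?K - E) *\<^sub>v ?w) \<bullet>c ?w)" using le unfolding loewner_le_def psd_def by auto
  also have "((?K - E) *\<^sub>v ?w) \<bullet>c ?w = (?K *\<^sub>v ?w) \<bullet>c ?w - (E *\<^sub>v ?w) \<bullet>c ?w"
    using cK cE by (simp add: minus_mult_distrib_mat_vec[OF cK cE] minus_scalar_prod_distrib[of _ ?D])
  also have "(?K *\<^sub>v ?w) \<bullet>c ?w = 1" using K_form[OF cS a] tr by simp
  finally show "cf n E a \<le> 1" unfolding cf_def by simp
qed



lemma h_ge0: fixes u :: real assumes "0 < u" shows "0 \<le> u * ln u - u + 1"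
proof -
  have "ln (1/u) \<le> 1/u - 1" using assms by (intro ln_le_minus_one) simp
  then have "- ln u \<le> 1/u - 1" using assms by (simp add: ln_div)
  then have "u * (- ln u) \<le> u * (1/u - 1)" using assms by (intro mult_left_mono) auto
  then show ?thesis using assms by (simp add: algebra_simps)
qed

lemma h_quad: fixes u :: real assumes "0 < u" "u \<le> 1" shows "(1-u)^2/2 \<le> u * ln u - u + 1"
proof -
  let ?g = "\<lambda>u::real. u * ln u - u + 1 - (1-u)^2/2"
  have "?g 1 \<le> ?g u"
  proof (rule DERIV_nonpos_imp_nonincreasing[OF assms(2)])
    fix x assume x: "u \<le> x" "x \<le> 1"
    then have x0: "0 < x" using assms by auto
    have "DERIV ?g x :> (ln x + 1 - 1 + (1 - x))"
      using x0 by (auto intro!: derivative_eq_intros simp: power2_eq_square field_simps)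
    moreover have "ln x + 1 - 1 + (1 - x) \<le> 0" using ln_le_minus_one[OF x0] by simp
    ultimately show "\<exists>y. DERIV ?g x :> y \<and> y \<le> 0" by blast
  qed
  then show ?thesis by simp
qed

lemma hv_ge0: fixes u v :: real assumes "0 < u" "0 < v" shows "0 \<le> u * ln (u/v) - u + v"
proof -
  have "0 \<le> v * ((u/v) * ln (u/v) - u/v + 1)" using h_ge0[of "u/v"] assms by simp
  also have "\<dots> = u * ln (u/v) - u + v" using assms by (simp add: field_simps)
  finally show ?thesis .
qed

lemma hv_quad: fixes u v :: real assumes "0 < u" "u \<le> v" shows "(v-u)^2/(2*v) \<le> u * ln (u/v) - u + v"
proof -
  have v: "0 < v" using assms by auto
  have "(v-u)^2/(2*v) = v * ((1-u/v)^2/2)" using v by (simp add: field_simps power2_eq_square)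
  also have "\<dots> \<le> v * ((u/v) * ln (u/v) - u/v + 1)"
    using h_quad[of "u/v"] assms v by (intro mult_left_mono) auto
  also have "\<dots> = u * ln (u/v) - u + v" using v by (simp add: field_simps)
  finally show ?thesis .
qed

lemma ln2_ge: "1/2 \<le> ln (2::real)"
proof -
  have "ln (1/2) \<le> 1/2 - (1::real)" by (intro ln_le_minus_one) simp
  then show ?thesis by (simp add: ln_div)
qed

lemma coord_sc:
  fixes a b :: real assumes a: "0 \<le> a" and b: "0 \<le> b"
  shows "(a-b)^2/(4*(a+b)) \<le> a * ln a + b * ln b - 2 * (((a+b)/2) * ln ((a+b)/2))"
proof -
  let ?m = "(a+b)/2"
  consider "a = 0" "b = 0" | "a = 0" "b > 0" | "a > 0" "b = 0" | "a > 0" "b > 0" using a b by linarith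
  then show ?thesis
  proof cases
    case 1 then show ?thesis by simp
  next
    case 2
    have "b * ln b - b * ln (b/2) = b * ln 2" using 2 by (simp add: ln_div algebra_simps)
    moreover have "b/4 \<le> b * ln 2" using ln2_ge 2 by (simp add: mult_left_mono[of "1/2" "ln 2" b] )
    ultimately show ?thesis using 2 by (simp add: power2_eq_square)
  next
    case 3
    have "a * ln a - a * ln (a/2) = a * ln 2" using 3 by (simp add: ln_div algebra_simps)
    moreover have "a/4 \<le> a * ln 2" using ln2_ge 3 by (simp add: mult_left_mono[of "1/2" "ln 2" a] )
    ultimately show ?thesis using 3 by (simp add: power2_eq_square)
  next
    case 4
    have m: "0 < ?m" using 4 by simp
    have eq: "a * ln a + b * ln b - 2 * (?m * ln ?m) = (a * ln (a/?m) - a + ?m) + (b * ln (b/?m) - b + ?m)"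
      using 4 m by (simp add: ln_div ln_mult field_simps)
    have key: "(?m - a)^2/(2*?m) = (a-b)^2/(4*(a+b))" "(?m - b)^2/(2*?m) = (a-b)^2/(4*(a+b))"
      using 4 by (simp_all add: field_simps power2_eq_square)
    show ?thesis
    proof (cases "a \<le> b")
      case True
      then have "a \<le> ?m" by simp
      then have "(?m - a)^2/(2*?m) \<le> a * ln (a/?m) - a + ?m" using hv_quad 4 by blast
      moreover have "0 \<le> b * ln (b/?m) - b + ?m" using hv_ge0 4 m by blast
      ultimately show ?thesis using eq key by linarith
    next
      case False
      then have "b \<le> ?m" by simp
      then have "(?m - b)^2/(2*?m) \<le> b * ln (b/?m) - b + ?m" using hv_quad 4 by blast
      moreover have "0 \<le> a * ln (a/?m) - a + ?m" using hv_ge0 4 m by blast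
      ultimately show ?thesis using eq key by linarith
    qed
  qed
qed



definition simplex :: "'a set \<Rightarrow> ('a \<Rightarrow> real) set" where
  "simplex A = {q. (\<forall>a\<in>A. 0 \<le> q a) \<and> sum q A = 1}"

definition Fv :: "'a set \<Rightarrow> ('x \<Rightarrow> 'a \<Rightarrow> real) \<Rightarrow> ('a \<Rightarrow> real) \<Rightarrow> 'x \<Rightarrow> real" where
  "Fv A c q x = (\<Sum>a\<in>A. q a * c x a)"

definition Hn :: "'a set \<Rightarrow> ('a \<Rightarrow> real) \<Rightarrow> real" where
  "Hn A q = (\<Sum>a\<in>A. q a * ln (q a))"

definition Cset :: "'a set \<Rightarrow> ('x \<Rightarrow> 'a \<Rightarrow> real) \<Rightarrow> real \<Rightarrow> ('x \<times> real) set \<Rightarrow> ('a \<Rightarrow> real) set" where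
  "Cset A c e T = {q \<in> simplex A. \<forall>(x,y)\<in>T. \<bar>Fv A c q x - y\<bar> \<le> e/3}"

definition qsel :: "'a set \<Rightarrow> ('x \<Rightarrow> 'a \<Rightarrow> real) \<Rightarrow> real \<Rightarrow> ('x \<times> real) set \<Rightarrow> ('a \<Rightarrow> real)" where
  "qsel A c e T = (SOME q. q \<in> Cset A c e T \<and> Hn A q < Inf (Hn A ` Cset A c e T) + e^2/288)"

definition badp :: "'a set \<Rightarrow> ('x \<Rightarrow> 'a \<Rightarrow> real) \<Rightarrow> real \<Rightarrow> ('x \<times> real) set \<Rightarrow> 'x \<times> real \<Rightarrow> bool" where
  "badp A c e T z \<longleftrightarrow> 2*e/3 < \<bar>Fv A c (qsel A c e T) (fst z) - snd z\<bar>"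

definition stp :: "'a set \<Rightarrow> ('x \<Rightarrow> 'a \<Rightarrow> real) \<Rightarrow> real \<Rightarrow> ('x \<times> real) set \<Rightarrow> ('x \<times> real) set \<Rightarrow> ('x \<times> real) set" where
  "stp A c e S T = (if Cset A c e T \<noteq> {} \<and> (\<exists>z\<in>S. badp A c e T z)
      then insert (SOME z. z \<in> S \<and> badp A c e T z) T else T)"

lemma simplex_le1: assumes "finite A" "q \<in> simplex A" "a \<in> A" shows "q a \<le> 1"
proof -
  have "q a \<le> sum q A" using assms by (intro member_le_sum) (auto simp: simplex_def)
  then show ?thesis using assms(2) by (simp add: simplex_def)
qed

lemma H_le0: assumes "finite A" "q \<in> simplex A" shows "Hn A q \<le> 0"
  unfolding Hn_def
proof (rule sum_nonpos)
  fix a assume a: "a \<in> A"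
  have q1: "q a \<le> 1" using simplex_le1[OF assms a] .
  have q0: "0 \<le> q a" using assms(2) a by (simp add: simplex_def)
  show "q a * ln (q a) \<le> 0"
  proof (cases "q a = 0")
    case False
    then have "0 < q a" using q0 by simp
    then have "ln (q a) \<le> 0" using ln_le_minus_one[of "q a"] q1 by simp
    then show ?thesis using q0 by (simp add: mult_nonneg_nonpos)
  qed simp
qed

lemma H_ge: assumes A: "finite A" "A \<noteq> {}" and q: "q \<in> simplex A"
  shows "- ln (real (card A)) \<le> Hn A q"
proof -
  let ?N = "real (card A)"
  have N: "0 < ?N" using A by (simp add: card_gt_0_iff)
  have tm: "- (q a * ln (q a)) \<le> q a * ln ?N + 1/?N - q a" if a: "a \<in> A" for a
  proof (cases "q a = 0")
    case True then show ?thesis using N by simp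
  next
    case False
    then have qa: "0 < q a" using q a unfolding simplex_def by force
    have "ln (1/(?N * q a)) \<le> 1/(?N * q a) - 1" using qa N by (intro ln_le_minus_one) simp
    then have "- ln ?N - ln (q a) \<le> 1/(?N * q a) - 1" using qa N by (simp add: ln_div ln_mult)
    then have "q a * (- ln ?N - ln (q a)) \<le> q a * (1/(?N * q a) - 1)" using qa by (intro mult_left_mono) auto
    moreover have "q a * (1/(?N * q a) - 1) = 1/?N - q a" using qa N by (simp add: field_simps)
    ultimately show ?thesis by (simp add: algebra_simps)
  qed
  have "- Hn A q = (\<Sum>a\<in>A. - (q a * ln (q a)))" unfolding Hn_def by (simp add: sum_negf)
  also have "\<dots> \<le> (\<Sum>a\<in>A. q a * ln ?N + 1/?N - q a)" by (rule sum_mono) (rule tm)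
  also have "\<dots> = ln ?N * sum q A + ?N * (1/?N) - sum q A"
    by (simp add: sum.distrib sum_subtractf sum_distrib_right[symmetric] mult.commute)
  also have "\<dots> = ln ?N" using q N unfolding simplex_def by simp
  finally show ?thesis by simp
qed

lemma qsel_prop:
  assumes A: "finite A" "A \<noteq> {}" and e: "e \<noteq> 0" and ne: "Cset A c e T \<noteq> {}"
  shows "qsel A c e T \<in> Cset A c e T \<and> Hn A (qsel A c e T) < Inf (Hn A ` Cset A c e T) + e^2/288"
proof -
  have "Inf (Hn A ` Cset A c e T) < Inf (Hn A ` Cset A c e T) + e^2/288" using e by simp
  then obtain h where "h \<in> Hn A ` Cset A c e T" "h < Inf (Hn A ` Cset A c e T) + e^2/288"
    using cInf_lessD[of "Hn A ` Cset A c e T"] ne by blast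
  then have "\<exists>q. q \<in> Cset A c e T \<and> Hn A q < Inf (Hn A ` Cset A c e T) + e^2/288" by blast
  then show ?thesis unfolding qsel_def by (rule someI_ex)
qed

lemma bdd_H: assumes "finite A" "A \<noteq> {}" shows "bdd_below (Hn A ` Cset A c e T)"
  using H_ge[OF assms] unfolding Cset_def by (intro bdd_belowI2[of _ "- ln (real (card A))"]) auto

lemma Fv_mid: "Fv A c (\<lambda>a. (q a + q' a)/2) x = (Fv A c q x + Fv A c q' x)/2"
proof -
  have "Fv A c (\<lambda>a. (q a + q' a)/2) x = (\<Sum>a\<in>A. (q a * c x a + q' a * c x a)/2)"
    unfolding Fv_def by (rule sum.cong[OF refl]) (simp add: add_divide_distrib distrib_right)
  also have "\<dots> = (\<Sum>a\<in>A. q a * c x a + q' a * c x a)/2" by (rule sum_divide_distrib[symmetric])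
  also have "\<dots> = (Fv A c q x + Fv A c q' x)/2" unfolding Fv_def by (simp only: sum.distrib)
  finally show ?thesis .
qed

lemma mid_abs: fixes u v y r :: real assumes "\<bar>u - y\<bar> \<le> r" "\<bar>v - y\<bar> \<le> r" shows "\<bar>(u+v)/2 - y\<bar> \<le> r"
proof -
  have "\<bar>(u+v)/2 - y\<bar> = \<bar>(u-y)+(v-y)\<bar>/2" by (simp add: field_simps)
  also have "\<dots> \<le> (\<bar>u-y\<bar> + \<bar>v-y\<bar>)/2" by (intro divide_right_mono abs_triangle_ineq) simp
  also have "\<dots> \<le> (r + r)/2" using assms by (intro divide_right_mono add_mono) auto
  also have "\<dots> = r" by simp
  finally show ?thesis .
qed

lemma Cset_mid: assumes "q \<in> Cset A c e T" "q' \<in> Cset A c e T"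
  shows "(\<lambda>a. (q a + q' a)/2) \<in> Cset A c e T"
proof -
  have s: "(\<lambda>a. (q a + q' a)/2) \<in> simplex A" using assms unfolding Cset_def simplex_def
    by (auto simp: sum_divide_distrib[symmetric] sum.distrib)
  { fix x y assume "(x,y) \<in> T"
    then have "\<bar>Fv A c q x - y\<bar> \<le> e/3" "\<bar>Fv A c q' x - y\<bar> \<le> e/3" using assms unfolding Cset_def by auto
    then have "\<bar>Fv A c (\<lambda>a. (q a + q' a)/2) x - y\<bar> \<le> e/3" unfolding Fv_mid by (rule mid_abs) }
  then show ?thesis using s unfolding Cset_def by auto
qed

lemma Cset_mono: "T \<subseteq> T' \<Longrightarrow> Cset A c e T' \<subseteq> Cset A c e T"
  unfolding Cset_def by auto

lemma H_sc:
  assumes "finite A" "q \<in> simplex A" "q' \<in> simplex A"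
  shows "(\<Sum>a\<in>A. (q a - q' a)^2/(q a + q' a))/4 \<le> Hn A q + Hn A q' - 2 * Hn A (\<lambda>a. (q a + q' a)/2)"
proof -
  have "(\<Sum>a\<in>A. (q a - q' a)^2/(q a + q' a))/4 = (\<Sum>a\<in>A. (q a - q' a)^2/(4*(q a + q' a)))"
    by (simp add: sum_divide_distrib divide_divide_eq_left mult.commute)
  also have "\<dots> \<le> (\<Sum>a\<in>A. q a * ln (q a) + q' a * ln (q' a) - 2 * (((q a + q' a)/2) * ln ((q a + q' a)/2)))"
    using assms unfolding simplex_def by (intro sum_mono coord_sc) auto
  also have "\<dots> = Hn A q + Hn A q' - 2 * Hn A (\<lambda>a. (q a + q' a)/2)"
    unfolding Hn_def by (simp add: sum.distrib sum_subtractf sum_distrib_left)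
  finally show ?thesis .
qed

lemma term_bound:
  fixes d s c t :: real
  assumes t: "0 < t" and s: "0 \<le> s" and ds: "s = 0 \<Longrightarrow> d = 0"
  shows "\<bar>d * c\<bar> \<le> t/2 * s * c^2 + d^2/(2*t*s)"
proof (cases "s = 0")
  case True then show ?thesis using ds by simp
next
  case False
  then have s0: "0 < s" using s by simp
  have "0 \<le> (t*s*\<bar>c\<bar> - \<bar>d\<bar>)^2" by simp
  then have "2*t*s*\<bar>d*c\<bar> \<le> t^2*s^2*c^2 + d^2" by (simp add: power2_eq_square algebra_simps abs_mult)
  then have "\<bar>d*c\<bar> \<le> (t^2*s^2*c^2 + d^2)/(2*t*s)" using t s0 by (simp add: field_simps)
  also have "\<dots> = t/2 * s * c^2 + d^2/(2*t*s)" using t s0 by (simp add: field_simps power2_eq_square)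
  finally show ?thesis .
qed

lemma aux_ld: fixes l D :: real assumes "0 < l" "l \<le> l/2 + D/l" shows "l*l \<le> 2*D"
proof -
  have "l/2 \<le> D/l" using assms by linarith
  then have "l/2*l \<le> D" using assms by (simp add: pos_le_divide_eq)
  then show ?thesis by simp
qed

lemma CS_bound:
  assumes A: "finite A" and q: "q \<in> simplex A" and q': "q' \<in> simplex A"
    and c: "\<And>a. a \<in> A \<Longrightarrow> 0 \<le> c x a \<and> c x a \<le> 1"
  shows "(Fv A c q x - Fv A c q' x)^2 \<le> 2 * (\<Sum>a\<in>A. (q a - q' a)^2/(q a + q' a))"
proof -
  let ?L = "Fv A c q x - Fv A c q' x"
  let ?D = "\<Sum>a\<in>A. (q a - q' a)^2/(q a + q' a)"
  have L: "?L = (\<Sum>a\<in>A. (q a - q' a) * c x a)" unfolding Fv_def by (simp add: sum_subtractf algebra_simps)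
  have q0: "\<And>a. a \<in> A \<Longrightarrow> 0 \<le> q a" "\<And>a. a \<in> A \<Longrightarrow> 0 \<le> q' a" using q q' unfolding simplex_def by auto
  have D0: "0 \<le> ?D" using q0 by (intro sum_nonneg) auto
  show ?thesis
  proof (cases "?L = 0")
    case True then show ?thesis using D0 by simp
  next
    case False
    define t where "t = \<bar>?L\<bar>/2"
    have t: "0 < t" using False unfolding t_def by simp
    have "\<bar>?L\<bar> \<le> (\<Sum>a\<in>A. \<bar>(q a - q' a) * c x a\<bar>)" unfolding L by (rule sum_abs)
    also have "\<dots> \<le> (\<Sum>a\<in>A. t/2 * (q a + q' a) * (c x a)^2 + (q a - q' a)^2/(2*t*(q a + q' a)))"
      using q0 t by (intro sum_mono term_bound) (auto, metis add_nonneg_eq_0_iff)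
    also have "\<dots> = t/2 * (\<Sum>a\<in>A. (q a + q' a) * (c x a)^2) + ?D/(2*t)"
      by (simp add: sum.distrib sum_distrib_left sum_divide_distrib mult.assoc divide_divide_eq_left mult_ac)
    also have "(\<Sum>a\<in>A. (q a + q' a) * (c x a)^2) \<le> (\<Sum>a\<in>A. (q a + q' a))"
    proof (rule sum_mono)
      fix a assume a: "a \<in> A"
      have "(c x a)^2 \<le> 1" using c[OF a] by (simp add: power_le_one)
      then show "(q a + q' a) * (c x a)^2 \<le> q a + q' a" using q0[OF a] q0(2)[OF a]
        by (simp add: mult_left_le)
    qed
    also have "(\<Sum>a\<in>A. (q a + q' a)) = 2" using q q' unfolding simplex_def by (simp add: sum.distrib)
    finally have "\<bar>?L\<bar> \<le> t/2 * 2 + ?D/(2*t)" using t by (simp add: mult_left_mono)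
    note h = this
    have e1: "t/2*2 = \<bar>?L\<bar>/2" and e2: "?D/(2*t) = ?D/\<bar>?L\<bar>" unfolding t_def by simp_all
    have "\<bar>?L\<bar> * \<bar>?L\<bar> \<le> 2 * ?D" using aux_ld[OF _ h[unfolded e1 e2]] False by simp
    then show ?thesis by (simp add: power2_eq_square)
  qed
qed



lemma step_inc:
  assumes A: "finite A" "A \<noteq> {}" and e: "0 < e"
    and c: "\<And>a. a \<in> A \<Longrightarrow> 0 \<le> c x a \<and> c x a \<le> 1"
    and p: "p \<in> Cset A c e (insert (x,y) T)"
    and bad: "badp A c e T (x,y)"
  shows "Hn A (qsel A c e T) + e^2/144 \<le> Hn A (qsel A c e (insert (x,y) T))"
proof -
  let ?q = "qsel A c e T" and ?q' = "qsel A c e (insert (x,y) T)"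
  let ?m = "\<lambda>a. (?q a + ?q' a)/2"
  let ?Dv = "\<Sum>a\<in>A. (?q a - ?q' a)^2/(?q a + ?q' a)"
  have sub: "Cset A c e (insert (x,y) T) \<subseteq> Cset A c e T" by (rule Cset_mono) auto
  have ne: "Cset A c e T \<noteq> {}" "Cset A c e (insert (x,y) T) \<noteq> {}" using p sub by auto
  have e0: "e \<noteq> 0" using e by simp
  note qp = qsel_prop[OF A e0 ne(1)] and q'p = qsel_prop[OF A e0 ne(2)]
  have q'T: "?q' \<in> Cset A c e T" using q'p sub by auto
  have mT: "?m \<in> Cset A c e T" using Cset_mid qp q'T by blast
  have "Inf (Hn A ` Cset A c e T) \<le> Hn A ?m" using mT bdd_H[OF A] by (intro cInf_lower) auto
  then have h1: "Hn A ?q < Hn A ?m + e^2/288" using qp by linarith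
  have sq: "?q \<in> simplex A" "?q' \<in> simplex A" using qp q'p unfolding Cset_def by auto
  have sc: "?Dv/4 \<le> Hn A ?q + Hn A ?q' - 2 * Hn A ?m" using H_sc[OF A(1) sq] .
  have cs: "(Fv A c ?q x - Fv A c ?q' x)^2 \<le> 2 * ?Dv" using CS_bound[of A ?q ?q' c x, OF A(1) sq c] by blast
  have b1: "2*e/3 < \<bar>Fv A c ?q x - y\<bar>" using bad unfolding badp_def by simp
  have b2: "\<bar>Fv A c ?q' x - y\<bar> \<le> e/3" using q'p unfolding Cset_def by auto
  have "e/3 < \<bar>Fv A c ?q x - Fv A c ?q' x\<bar>" using b1 b2 by linarith
  then have "(e/3)^2 < \<bar>Fv A c ?q x - Fv A c ?q' x\<bar>^2" using e by (intro power_strict_mono) auto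
  then have "(e/3)^2 < 2 * ?Dv" using cs by simp
  then have "e^2/18 < ?Dv" by (simp add: power_divide)
  then show ?thesis using h1 sc by linarith
qed

lemma stp_sub: "stp A c e S T = T \<or> (\<exists>z\<in>S. stp A c e S T = insert z T)"
proof (cases "Cset A c e T \<noteq> {} \<and> (\<exists>z\<in>S. badp A c e T z)")
  case True
  let ?z = "SOME z. z \<in> S \<and> badp A c e T z"
  have "?z \<in> S \<and> badp A c e T ?z" using True using someI_ex[of "\<lambda>z. z \<in> S \<and> badp A c e _ z"] by blast
  moreover have "stp A c e S T = insert ?z T" unfolding stp_def by (rule if_P[OF True])
  ultimately show ?thesis by blast
next
  case False
  have "stp A c e S T = T" unfolding stp_def by (rule if_not_P[OF False])
  then show ?thesis by blast
qed

lemma iter_props: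
  "(stp A c e S ^^ k) {} \<subseteq> S \<and> finite ((stp A c e S ^^ k) {}) \<and> card ((stp A c e S ^^ k) {}) \<le> k"
proof (induction k)
  case 0 then show ?case by simp
next
  case (Suc k)
  let ?T = "(stp A c e S ^^ k) {}"
  have eq: "(stp A c e S ^^ Suc k) {} = stp A c e S ?T" by simp
  from stp_sub[of A c e S ?T] show ?case
  proof
    assume "stp A c e S ?T = ?T" then show ?thesis using Suc eq by simp
  next
    assume "\<exists>z\<in>S. stp A c e S ?T = insert z ?T"
    then obtain z where "z \<in> S" "stp A c e S ?T = insert z ?T" by blast
    then show ?thesis using Suc eq by (simp add: card_insert_if)
  qed
qed

lemma iter_stable:
  assumes "\<not> (\<exists>z\<in>S. badp A c e ((stp A c e S ^^ k) {}) z)"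
  shows "(stp A c e S ^^ (k+j)) {} = (stp A c e S ^^ k) {}"
proof (induction j)
  case 0 then show ?case by simp
next
  case (Suc j)
  have "(stp A c e S ^^ (k + Suc j)) {} = stp A c e S ((stp A c e S ^^ (k+j)) {})" by simp
  also have "\<dots> = stp A c e S ((stp A c e S ^^ k) {})" using Suc by simp
  also have "\<dots> = (stp A c e S ^^ k) {}" using assms unfolding stp_def by auto
  finally show ?case .
qed

lemma clip: fixes v y :: real assumes "0 \<le> y" "y \<le> 1" shows "\<bar>max 0 (min 1 v) - y\<bar> \<le> \<bar>v - y\<bar>"
  using assms by (cases "v \<le> 0"; cases "v \<le> 1") (simp_all add: abs_if)

lemma no_bad:
  assumes A: "finite A" "A \<noteq> {}" and e: "0 < e"
    and cb: "\<forall>x\<in>X. \<forall>a\<in>A. 0 \<le> c x a \<and> c x a \<le> 1"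
    and p: "p \<in> simplex A" and S: "S \<subseteq> X \<times> {0..1}"
    and noisy: "\<forall>(x,y)\<in>S. \<bar>y - Fv A c p x\<bar> \<le> e/3"
    and M: "ln (real (card A)) < real (M+1) * (e^2/144)"
  shows "\<not> (\<exists>z\<in>S. badp A c e ((stp A c e S ^^ M) {}) z)"
proof
  assume badM: "\<exists>z\<in>S. badp A c e ((stp A c e S ^^ M) {}) z"
  let ?T = "\<lambda>k. (stp A c e S ^^ k) {}"
  have pS: "p \<in> Cset A c e S" using p noisy unfolding Cset_def by (auto simp: abs_minus_commute)
  have pT: "p \<in> Cset A c e T" if "T \<subseteq> S" for T using Cset_mono[OF that] pS by blast
  have allbad: "\<exists>z\<in>S. badp A c e (?T k) z" if k: "k \<le> M" for k
  proof (rule ccontr)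
    assume nb: "\<not> (\<exists>z\<in>S. badp A c e (?T k) z)"
    have "?T (k + (M - k)) = ?T k" using iter_stable[OF nb] .
    then have "?T M = ?T k" using k by simp
    then show False using nb badM by simp
  qed
  have pot: "Hn A (qsel A c e (?T 0)) + real k * (e^2/144) \<le> Hn A (qsel A c e (?T k))" if "k \<le> M+1" for k
    using that
  proof (induction k)
    case 0 then show ?case by simp
  next
    case (Suc k)
    then have k: "k \<le> M" by simp
    have sub: "?T k \<subseteq> S" using iter_props by blast
    have ne: "Cset A c e (?T k) \<noteq> {}" using pT[OF sub] by blast
    let ?z = "SOME z. z \<in> S \<and> badp A c e (?T k) z"
    have zp: "?z \<in> S \<and> badp A c e (?T k) ?z" using allbad[OF k] using someI_ex[of "\<lambda>z. z \<in> S \<and> badp A c e _ z"] by blast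
    obtain x y where xy: "?z = (x,y)" by fastforce
    have TS: "?T (Suc k) = insert (x,y) (?T k)" using allbad[OF k] ne xy by (simp add: stp_def)
    have xX: "x \<in> X" using zp xy S by auto
    have pi: "p \<in> Cset A c e (insert (x,y) (?T k))" using zp xy sub by (intro pT) auto
    have "Hn A (qsel A c e (?T k)) + e^2/144 \<le> Hn A (qsel A c e (?T (Suc k)))"
      unfolding TS using step_inc[OF A e _ pi] cb xX zp xy by auto
    moreover have "Hn A (qsel A c e (?T 0)) + real k * (e^2/144) \<le> Hn A (qsel A c e (?T k))"
      using Suc.IH k by simp
    moreover have "real (Suc k) * (e^2/144) = real k * (e^2/144) + e^2/144" by (simp add: algebra_simps)
    ultimately show ?case by linarith
  qed
  have s0: "qsel A c e (?T 0) \<in> simplex A"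
    using qsel_prop[OF A _ , of e c "?T 0"] pT[of "?T 0"] e unfolding Cset_def by auto
  have sM: "qsel A c e (?T (M+1)) \<in> simplex A"
  proof -
    have "?T (M+1) \<subseteq> S" using iter_props by blast
    then have "Cset A c e (?T (M+1)) \<noteq> {}" using pT by blast
    then show ?thesis using qsel_prop[OF A _ , of e c "?T (M+1)"] e unfolding Cset_def by auto
  qed
  have "- ln (real (card A)) + real (M+1) * (e^2/144) \<le> Hn A (qsel A c e (?T (M+1)))"
    using pot[of "M+1"] H_ge[OF A s0] by linarith
  moreover have "Hn A (qsel A c e (?T (M+1))) \<le> 0" using H_le0[OF A(1) sM] .
  ultimately show False using M by linarith
qed

theorem abstract_scheme:
  fixes A :: "'a set" and c :: "'x \<Rightarrow> 'a \<Rightarrow> real" and X :: "'x set" and e :: real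
  assumes A: "finite A" "A \<noteq> {}" and e: "0 < e"
    and cb: "\<forall>x\<in>X. \<forall>a\<in>A. 0 \<le> c x a \<and> c x a \<le> 1"
  shows "\<exists>(\<kappa> :: ('x \<times> real) set \<Rightarrow> ('x \<times> real) set) (\<rho> :: ('x \<times> real) set \<Rightarrow> 'x \<Rightarrow> real).
     (\<forall>S. \<kappa> S \<subseteq> S \<and> real (card (\<kappa> S)) \<le> 144 * ln (real (card A)) / e^2 \<and>
          (\<forall>x. 0 \<le> \<rho> (\<kappa> S) x \<and> \<rho> (\<kappa> S) x \<le> 1)) \<and>
     (\<forall>p\<in>simplex A. \<forall>S. S \<subseteq> X \<times> {0..1} \<longrightarrow> (\<forall>(x,y)\<in>S. \<bar>y - Fv A c p x\<bar> \<le> e/3) \<longrightarrow>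
          (\<forall>(x,y)\<in>S. \<bar>\<rho> (\<kappa> S) x - Fv A c p x\<bar> \<le> e))"
proof -
  define r where "r = 144 * ln (real (card A)) / e^2"
  have "1 \<le> card A" using A by (simp add: card_gt_0_iff Suc_le_eq)
  then have "0 \<le> ln (real (card A))" by (intro ln_ge_zero) simp
  then have r0: "0 \<le> r" unfolding r_def by simp
  define M where "M = nat \<lfloor>r\<rfloor>"
  have M1: "real M \<le> r" unfolding M_def using r0 by linarith
  have M2: "r < real M + 1" unfolding M_def using r0 by linarith
  have Mln: "ln (real (card A)) < real (M+1) * (e^2/144)"
  proof -
    have "ln (real (card A)) = r * (e^2/144)" unfolding r_def using e by simp
    also have "\<dots> < (real M + 1) * (e^2/144)" using M2 e by (intro mult_strict_right_mono) auto
    finally show ?thesis by (simp add: add.commute)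
  qed
  define \<kappa> where "\<kappa> S = (stp A c e S ^^ M) {}" for S
  define \<rho> where "\<rho> T x = max 0 (min 1 (Fv A c (qsel A c e T) x))" for T x
  show ?thesis
  proof (intro exI[of _ \<kappa>] exI[of _ \<rho>] conjI allI ballI impI)
    fix S :: "('x \<times> real) set"
    show "\<kappa> S \<subseteq> S" unfolding \<kappa>_def using iter_props by blast
    have "card (\<kappa> S) \<le> M" unfolding \<kappa>_def using iter_props by blast
    then show "real (card (\<kappa> S)) \<le> 144 * ln (real (card A)) / e^2" using M1 unfolding r_def by linarith
  next
    fix S x show "0 \<le> \<rho> (\<kappa> S) x" "\<rho> (\<kappa> S) x \<le> 1" unfolding \<rho>_def by auto
  next
    fix p S z
    assume p: "p \<in> simplex A" and S: "S \<subseteq> X \<times> {0..1}"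
      and noisy: "\<forall>(x,y)\<in>S. \<bar>y - Fv A c p x\<bar> \<le> e/3" and z: "z \<in> S"
    obtain x y where xy: "z = (x,y)" by fastforce
    have nb: "\<not> badp A c e (\<kappa> S) (x,y)"
      using no_bad[OF A e cb p S noisy Mln] z xy unfolding \<kappa>_def by blast
    have y01: "0 \<le> y" "y \<le> 1" using S z xy by auto
    have "\<bar>\<rho> (\<kappa> S) x - y\<bar> \<le> 2*e/3"
      using clip[OF y01, of "Fv A c (qsel A c e (\<kappa> S)) x"] nb unfolding \<rho>_def badp_def by simp
    moreover have "\<bar>y - Fv A c p x\<bar> \<le> e/3" using noisy z xy by auto
    ultimately have "\<bar>\<rho> (\<kappa> S) x - Fv A c p x\<bar> \<le> e" by linarith
    then show "case z of (x, y) \<Rightarrow> \<bar>\<rho> (\<kappa> S) x - Fv A c p x\<bar> \<le> e" using xy by simp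
  qed
qed



lemma f_eq_Fv: "E \<in> test_ops n \<Longrightarrow> f_pauli n p E = Fv (pauli_idx n) (cf n) p E"
  unfolding Fv_def test_ops_def psd_def by (auto intro: f_pauli_lin)

lemma ln_card: "144 * ln (real (card (pauli_idx n))) / e^2 \<le> 432 * real n / e^2"
proof -
  have "ln (real (card (pauli_idx n))) = real n * ln 4" by (simp add: card_pauli_idx ln_realpow)
  also have "\<dots> \<le> real n * 3" using ln_le_minus_one[of "4::real"] by (intro mult_left_mono) auto
  finally have "144 * ln (real (card (pauli_idx n))) \<le> 432 * real n" by simp
  then show ?thesis by (simp add: divide_right_mono)
qed

theorem corollary3p17:
  "\<exists>C :: real. 0 < C \<and> (\<forall>(n::nat) (\<epsilon>::real). 0 < \<epsilon> \<and> \<epsilon> < 1 \<longrightarrow>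
     (\<exists>(\<kappa> :: (complex mat \<times> real) set \<Rightarrow> (complex mat \<times> real) set)
        (\<rho> :: (complex mat \<times> real) set \<Rightarrow> complex mat \<Rightarrow> real).
        (\<forall>S. finite S \<and> S \<subseteq> test_ops n \<times> {0..1} \<longrightarrow>
            \<kappa> S \<subseteq> S \<and> real (card (\<kappa> S)) \<le> C * real n / \<epsilon>^2 \<and>
            (\<forall>E \<in> test_ops n. 0 \<le> \<rho> (\<kappa> S) E \<and> \<rho> (\<kappa> S) E \<le> 1)) \<and>
        (\<forall>p \<in> pauli_channels n. \<forall>S. finite S \<and> S \<subseteq> test_ops n \<times> {0..1} \<longrightarrow>
            (\<forall>(E, y) \<in> S. y = f_pauli n p E) \<longrightarrow>
            (\<forall>(E, y) \<in> S. \<bar>\<rho> (\<kappa> S) E - f_pauli n p E\<bar> \<le> \<epsilon>)) \<and>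
        (\<forall>p \<in> pauli_channels n. \<forall>S. finite S \<and> S \<subseteq> test_ops n \<times> {0..1} \<longrightarrow>
            (\<forall>(E, y) \<in> S. \<bar>y - f_pauli n p E\<bar> \<le> \<epsilon> / 3) \<longrightarrow>
            (\<forall>(E, y) \<in> S. \<bar>\<rho> (\<kappa> S) E - f_pauli n p E\<bar> \<le> \<epsilon>))))"
proof (intro exI[of _ "432::real"] conjI allI impI)
  show "(0::real) < 432" by simp
  fix n :: nat and \<epsilon> :: real
  assume \<epsilon>: "0 < \<epsilon> \<and> \<epsilon> < 1"
  have A: "finite (pauli_idx n)" "pauli_idx n \<noteq> {}"
    using finite_pauli_idx card_pauli_idx[of n] by auto
  have cb: "\<forall>x\<in>test_ops n. \<forall>a\<in>pauli_idx n. 0 \<le> cf n x a \<and> cf n x a \<le> 1"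
    using cf_bounds by blast
  obtain \<kappa> \<rho> where
    k1: "\<forall>S. \<kappa> S \<subseteq> S \<and> real (card (\<kappa> S)) \<le> 144 * ln (real (card (pauli_idx n))) / \<epsilon>^2 \<and>
          (\<forall>x. 0 \<le> \<rho> (\<kappa> S) x \<and> \<rho> (\<kappa> S) x \<le> 1)" and
    k2: "\<forall>p\<in>simplex (pauli_idx n). \<forall>S. S \<subseteq> test_ops n \<times> {0..1} \<longrightarrow>
          (\<forall>(x,y)\<in>S. \<bar>y - Fv (pauli_idx n) (cf n) p x\<bar> \<le> \<epsilon>/3) \<longrightarrow>
          (\<forall>(x,y)\<in>S. \<bar>\<rho> (\<kappa> S) x - Fv (pauli_idx n) (cf n) p x\<bar> \<le> \<epsilon>)"
    using abstract_scheme[OF A _ cb, of \<epsilon>] \<epsilon> by blast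
  have pc: "pauli_channels n = simplex (pauli_idx n)" unfolding pauli_channels_def simplex_def by simp
  have noisy: "\<forall>(E, y) \<in> S. \<bar>\<rho> (\<kappa> S) E - f_pauli n p E\<bar> \<le> \<epsilon>"
    if p: "p \<in> pauli_channels n" and S: "S \<subseteq> test_ops n \<times> {0..1}"
      and h: "\<forall>(E, y) \<in> S. \<bar>y - f_pauli n p E\<bar> \<le> \<epsilon> / 3" for p S
  proof -
    have h': "\<forall>(x,y)\<in>S. \<bar>y - Fv (pauli_idx n) (cf n) p x\<bar> \<le> \<epsilon>/3"
      using h S f_eq_Fv by fastforce
    have "\<forall>(x,y)\<in>S. \<bar>\<rho> (\<kappa> S) x - Fv (pauli_idx n) (cf n) p x\<bar> \<le> \<epsilon>"
      using k2 p S h' pc by blast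
    then show ?thesis using S f_eq_Fv by fastforce
  qed
  have P1: "\<forall>S. finite S \<and> S \<subseteq> test_ops n \<times> {0..1} \<longrightarrow>
            \<kappa> S \<subseteq> S \<and> real (card (\<kappa> S)) \<le> 432 * real n / \<epsilon>^2 \<and>
            (\<forall>E \<in> test_ops n. 0 \<le> \<rho> (\<kappa> S) E \<and> \<rho> (\<kappa> S) E \<le> 1)"
    using k1 ln_card[of n \<epsilon>] by (meson order_trans)
  have P2: "\<forall>p \<in> pauli_channels n. \<forall>S. finite S \<and> S \<subseteq> test_ops n \<times> {0..1} \<longrightarrow>
            (\<forall>(E, y) \<in> S. y = f_pauli n p E) \<longrightarrow>
            (\<forall>(E, y) \<in> S. \<bar>\<rho> (\<kappa> S) E - f_pauli n p E\<bar> \<le> \<epsilon>)"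
  proof (rule ballI, rule allI, rule impI, rule impI)
    fix p S assume p: "p \<in> pauli_channels n" and S: "finite S \<and> S \<subseteq> test_ops n \<times> {0..1}"
      and h: "\<forall>(E, y) \<in> S. y = f_pauli n p E"
    have "\<forall>(E, y) \<in> S. \<bar>y - f_pauli n p E\<bar> \<le> \<epsilon> / 3" using h \<epsilon> by auto
    then show "\<forall>(E, y) \<in> S. \<bar>\<rho> (\<kappa> S) E - f_pauli n p E\<bar> \<le> \<epsilon>" using noisy p S by blast
  qed
  have P3: "\<forall>p \<in> pauli_channels n. \<forall>S. finite S \<and> S \<subseteq> test_ops n \<times> {0..1} \<longrightarrow>
            (\<forall>(E, y) \<in> S. \<bar>y - f_pauli n p E\<bar> \<le> \<epsilon> / 3) \<longrightarrow>
            (\<forall>(E, y) \<in> S. \<bar>\<rho> (\<kappa> S) E - f_pauli n p E\<bar> \<le> \<epsilon>)"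
    using noisy by blast
  show "\<exists>(\<kappa> :: (complex mat \<times> real) set \<Rightarrow> (complex mat \<times> real) set)
        (\<rho> :: (complex mat \<times> real) set \<Rightarrow> complex mat \<Rightarrow> real).
        (\<forall>S. finite S \<and> S \<subseteq> test_ops n \<times> {0..1} \<longrightarrow>
            \<kappa> S \<subseteq> S \<and> real (card (\<kappa> S)) \<le> 432 * real n / \<epsilon>^2 \<and>
            (\<forall>E \<in> test_ops n. 0 \<le> \<rho> (\<kappa> S) E \<and> \<rho> (\<kappa> S) E \<le> 1)) \<and>
        (\<forall>p \<in> pauli_channels n. \<forall>S. finite S \<and> S \<subseteq> test_ops n \<times> {0..1} \<longrightarrow>
            (\<forall>(E, y) \<in> S. y = f_pauli n p E) \<longrightarrow>
            (\<forall>(E, y) \<in> S. \<bar>\<rho> (\<kappa> S) E - f_pauli n p E\<bar> \<le> \<epsilon>)) \<and>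
        (\<forall>p \<in> pauli_channels n. \<forall>S. finite S \<and> S \<subseteq> test_ops n \<times> {0..1} \<longrightarrow>
            (\<forall>(E, y) \<in> S. \<bar>y - f_pauli n p E\<bar> \<le> \<epsilon> / 3) \<longrightarrow>
            (\<forall>(E, y) \<in> S. \<bar>\<rho> (\<kappa> S) E - f_pauli n p E\<bar> \<le> \<epsilon>))"
    using P1 P2 P3 by blast
qed

end
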